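(* Let $L$ be a perfectoid field of characteristic $0$ contained in a complete algebraically closed field $C$, and let $\mathcal D_\infty=\{|q|<1\}\subseteq\mathrm{Spa}(L\langle q^{1/p^\infty}\rangle,\mathcal O_L\langle q^{1/p^\infty}\rangle)$. If $f\in\mathcal O(\mathcal D_\infty)$ takes the constant value $a\in L$ at all $(C,\mathcal O_C)$-points of $\mathcal D_\infty$, then $f=a$ in $\mathcal O(\mathcal D_\infty)$.
   Context: $\mathcal O(\mathcal D_\infty)$ consists of series $\sum_{n\in\mathbb Z[1/p]_{\ge0}}a_nq^n$ with $a_n\in L$, $|a_n|r^n\to0$ for all $0\le r<1$, and such that for every $\delta>0$ and every bounded interval $I$ only finitely many $n\in I$ have $|a_n|>\delta$. $(C,\mathcal O_C)$-points of $\mathcal D_\infty$ correspond to compatible systems $(x^{1/p^i})_i$ of $p$-power roots of topologically nilpotent $x\in\mathcal O_C$. (In the paper $L=L_x$ is the field of definition of the Tate curve at a cusp.) *)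

theory Defs
  imports Complex_Main "HOL-Computational_Algebra.Polynomial"
begin

definition nonarch_abs :: "('c::field \<Rightarrow> real) \<Rightarrow> bool" where
  "nonarch_abs v \<longleftrightarrow> (\<forall>x. 0 \<le> v x) \<and> (\<forall>x. v x = 0 \<longleftrightarrow> x = 0) \<and>
     (\<forall>x y. v (x * y) = v x * v y) \<and> (\<forall>x y. v (x + y) \<le> max (v x) (v y))"

definition v_cauchy :: "('c::field \<Rightarrow> real) \<Rightarrow> (nat \<Rightarrow> 'c) \<Rightarrow> bool" where
  "v_cauchy v X \<longleftrightarrow> (\<forall>e>0. \<exists>N. \<forall>m\<ge>N. \<forall>n\<ge>N. v (X m - X n) < e)"

definition v_lim :: "('c::field \<Rightarrow> real) \<Rightarrow> (nat \<Rightarrow> 'c) \<Rightarrow> 'c \<Rightarrow> bool" where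
  "v_lim v X l \<longleftrightarrow> (\<forall>e>0. \<exists>N. \<forall>n\<ge>N. v (X n - l) < e)"

definition v_complete_on :: "('c::field \<Rightarrow> real) \<Rightarrow> 'c set \<Rightarrow> bool" where
  "v_complete_on v S \<longleftrightarrow> (\<forall>X. (\<forall>n. X n \<in> S) \<longrightarrow> v_cauchy v X \<longrightarrow> (\<exists>l\<in>S. v_lim v X l))"

definition alg_closed :: "'c::field itself \<Rightarrow> bool" where
  "alg_closed _ \<longleftrightarrow> (\<forall>P::'c poly. 0 < degree P \<longrightarrow> (\<exists>z. poly P z = 0))"

definition is_subfield :: "'c::field set \<Rightarrow> bool" where
  "is_subfield L \<longleftrightarrow> 0 \<in> L \<and> 1 \<in> L \<and> (\<forall>x\<in>L. \<forall>y\<in>L. x + y \<in> L \<and> x * y \<in> L) \<and>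
     (\<forall>x\<in>L. - x \<in> L \<and> inverse x \<in> L)"

text \<open>L is a perfectoid field (with residue characteristic p) for the restriction of v:
  complete, non-discrete rank one valuation, residue characteristic p (|p| < 1),
  Frobenius surjective on O_L / p.\<close>
definition perfectoid_in :: "('c::field \<Rightarrow> real) \<Rightarrow> nat \<Rightarrow> 'c set \<Rightarrow> bool" where
  "perfectoid_in v p L \<longleftrightarrow> is_subfield L \<and> v_complete_on v L \<and> prime p \<and>
     v (of_nat p) < 1 \<and>
     (\<forall>e>0. \<exists>x\<in>L. 1 < v x \<and> v x < 1 + e) \<and>
     (\<forall>x\<in>L. v x \<le> 1 \<longrightarrow> (\<exists>y\<in>L. v y \<le> 1 \<and> v (x - y ^ p) \<le> v (of_nat p)))"

definition Zp_idx :: "nat \<Rightarrow> rat set" where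
  "Zp_idx p = {n. 0 \<le> n \<and> (\<exists>k::nat. \<exists>m::int. n = of_int m / of_nat (p ^ k))}"

text \<open>O(D_infinity): coefficient families a : Z[1/p]_{>=0} -> L (values off the index set are irrelevant).\<close>
definition O_Dinf :: "('c::field \<Rightarrow> real) \<Rightarrow> nat \<Rightarrow> 'c set \<Rightarrow> (rat \<Rightarrow> 'c) \<Rightarrow> bool" where
  "O_Dinf v p L a \<longleftrightarrow> (\<forall>n\<in>Zp_idx p. a n \<in> L) \<and>
     (\<forall>r::real. 0 \<le> r \<and> r < 1 \<longrightarrow> (\<forall>e>0. finite {n\<in>Zp_idx p. e \<le> v (a n) * r powr (of_rat n)})) \<and>
     (\<forall>d>0. \<forall>B::rat. finite {n\<in>Zp_idx p. n \<le> B \<and> d < v (a n)})"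

text \<open>(C, O_C)-points: compatible systems of p-power roots of a topologically nilpotent x = x 0.\<close>
definition Dinf_point :: "('c::field \<Rightarrow> real) \<Rightarrow> nat \<Rightarrow> (nat \<Rightarrow> 'c) \<Rightarrow> bool" where
  "Dinf_point v p x \<longleftrightarrow> v (x 0) < 1 \<and> (\<forall>i. x (Suc i) ^ p = x i)"

text \<open>x^n for n = m / p^k, computed as (x^(1/p^k))^m.\<close>
definition qpow :: "nat \<Rightarrow> (nat \<Rightarrow> 'c::field) \<Rightarrow> rat \<Rightarrow> 'c" where
  "qpow p x n = (let k = (LEAST k. \<exists>m::nat. n = of_nat m / of_nat (p ^ k))
                 in x k ^ nat \<lfloor>n * of_nat (p ^ k)\<rfloor>)"

definition v_has_sum :: "('c::field \<Rightarrow> real) \<Rightarrow> ('i \<Rightarrow> 'c) \<Rightarrow> 'i set \<Rightarrow> 'c \<Rightarrow> bool" where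
  "v_has_sum v g S s \<longleftrightarrow> (\<forall>e>0. \<exists>F. finite F \<and> F \<subseteq> S \<and>
     (\<forall>G. finite G \<and> F \<subseteq> G \<and> G \<subseteq> S \<longrightarrow> v (s - sum g G) < e))"

end

theory Submission
  imports Defs
begin


primrec rs :: "nat \<Rightarrow> 'c::field \<Rightarrow> nat \<Rightarrow> 'c" where
  "rs p y 0 = y"
| "rs p y (Suc i) = (SOME z. z ^ p = rs p y i)"

lemma alg_root:
  assumes "alg_closed TYPE('c::field)" "0 < p"
  shows "\<exists>z::'c. z ^ p = y"
proof -
  let ?P = "monom (1::'c) p - [:y:]"
  have "degree (monom (1::'c) p) = p" by (simp add: degree_monom_eq)
  hence "degree ?P = p"
    using assms(2) by (metis degree_add_eq_left degree_pCons_0 diff_conv_add_uminus degree_minus)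
  hence "0 < degree ?P" using assms(2) by simp
  then obtain z where "poly ?P z = 0" using assms(1) unfolding alg_closed_def by blast
  thus ?thesis by (auto simp: poly_monom)
qed

lemma rs_root:
  assumes "alg_closed TYPE('c::field)" "0 < p"
  shows "rs p (y::'c) (Suc i) ^ p = rs p y i"
proof -
  have "\<exists>z. z ^ p = rs p y i" using alg_root[OF assms] .
  from someI_ex[OF this] show ?thesis by simp
qed

lemma rs_point:
  assumes "alg_closed TYPE('c::field)" "0 < p" "v y < 1"
  shows "Dinf_point v p (rs p (y::'c))"
  using rs_root[OF assms(1,2)] assms(3) by (simp add: Dinf_point_def)

context
  fixes v :: "'c::field \<Rightarrow> real"
  assumes na: "nonarch_abs v"
begin

lemma v_nonneg: "0 \<le> v x" using na by (simp add: nonarch_abs_def)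
lemma v_zero_iff: "v x = 0 \<longleftrightarrow> x = 0" using na by (simp add: nonarch_abs_def)
lemma v_mult: "v (x * y) = v x * v y" using na by (simp add: nonarch_abs_def)
lemma v_add: "v (x + y) \<le> max (v x) (v y)" using na by (simp add: nonarch_abs_def)

lemma v_zero: "v 0 = 0" using v_zero_iff by simp

lemma v_one: "v 1 = 1"
proof -
  have "v 1 = v 1 * v 1" using v_mult[of 1 1] by simp
  moreover have "v 1 \<noteq> 0" using v_zero_iff by simp
  ultimately show ?thesis by simp
qed

lemma v_power: "v (x ^ n) = v x ^ n"
  by (induction n) (simp_all add: v_one v_mult)

lemma v_uminus: "v (- x) = v x"
proof -
  have "v (-1) * v (-1) = 1" using v_mult[of "-1" "-1"] v_one by simp
  hence "(v (-1) - 1) * (v (-1) + 1) = 0" by (simp add: algebra_simps)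
  hence "v (-1) = 1 \<or> v (-1) = -1" by auto
  hence "v (-1) = 1" using v_nonneg[of "-1"] by auto
  thus ?thesis using v_mult[of "-1" x] by simp
qed

lemma v_inverse: "v (inverse x) = inverse (v x)"
proof (cases "x = 0")
  case False
  have "v x * v (inverse x) = 1" using v_mult[of x "inverse x"] False v_one by simp
  thus ?thesis using inverse_unique by metis
qed (simp add: v_zero)

lemma v_add_dom:
  assumes "v b < v a" shows "v (a + b) = v a"
proof -
  have "v a \<le> max (v (a + b)) (v (- b))" using v_add[of "a+b" "-b"] by simp
  hence "v a \<le> v (a + b)" using assms v_uminus by (auto simp: max_def split: if_splits)
  moreover have "v (a + b) \<le> v a" using v_add[of a b] assms by simp
  ultimately show ?thesis by simp
qed

lemma v_sum_less:
  assumes "finite H" "0 < T" "\<And>n. n \<in> H \<Longrightarrow> v (g n) < T"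
  shows "v (sum g H) < T"
  using assms
proof (induction H rule: finite_induct)
  case empty thus ?case using v_zero by simp
next
  case (insert x F)
  have "v (g x + sum g F) \<le> max (v (g x)) (v (sum g F))" by (rule v_add)
  moreover have "v (g x) < T" using insert.prems by simp
  moreover have "v (sum g F) < T" using insert by simp
  ultimately show ?case using insert.hyps by simp
qed

lemma point_v:
  fixes p :: nat
  assumes "0 < p" "\<forall>i. x (Suc i) ^ p = x i"
  shows "v (x k) = v (x 0) powr (1 / real p ^ k)"
proof (induction k)
  case 0 thus ?case using v_nonneg[of "x 0"]
    by (cases "v (x 0) = 0") auto
next
  case (Suc k)
  let ?a = "v (x (Suc k))"
  have h: "?a ^ p = v (x k)" using assms(2) v_power by metis
  have "?a = v (x k) powr (1 / real p)"
  proof (cases "?a = 0")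
    case True thus ?thesis using h assms(1) by (simp add: power_0_left)
  next
    case False
    hence "0 < ?a" using v_nonneg order_less_le by metis
    hence "v (x k) = ?a powr real p" using h powr_realpow by metis
    thus ?thesis using assms(1) \<open>0 < ?a\<close> by (simp add: powr_powr)
  qed
  also have "\<dots> = v (x 0) powr (1 / real p ^ Suc k)"
    using Suc by (simp add: powr_powr mult.commute)
  finally show ?case .
qed

end


lemma qpow_repr:
  assumes "1 < p" "n \<in> Zp_idx p"
  shows "\<exists>k (m::nat). n = of_nat m / of_nat (p ^ k) \<and> qpow p x n = x k ^ m"
proof -
  from assms(2) obtain k' and m' :: int where n0: "0 \<le> n" and nk: "n = of_int m' / of_nat (p ^ k')"
    unfolding Zp_idx_def by blast
  have pos: "(0::rat) < of_nat (p ^ k')" using assms(1) by simp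
  have "0 \<le> m'"
  proof (rule ccontr)
    assume "\<not> 0 \<le> m'"
    hence "(of_int m' :: rat) < 0" by simp
    hence "n < 0" using nk pos by (simp add: divide_neg_pos)
    thus False using n0 by simp
  qed
  hence ex: "\<exists>k (m::nat). n = of_nat m / of_nat (p ^ k)"
    using nk by (intro exI[of _ k'] exI[of _ "nat m'"]) simp
  define k where "k = (LEAST k. \<exists>m::nat. n = of_nat m / of_nat (p ^ k))"
  have "\<exists>m::nat. n = of_nat m / of_nat (p ^ k)"
    unfolding k_def using ex by (rule LeastI_ex)
  then obtain m :: nat where m: "n = of_nat m / of_nat (p ^ k)" by blast
  have pk: "(of_nat (p ^ k) :: rat) \<noteq> 0" using assms(1) by simp
  have "n * of_nat (p ^ k) = of_nat m" using m pk by simp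
  hence fl: "nat \<lfloor>n * of_nat (p ^ k)\<rfloor> = m" by simp
  have "qpow p x n = x k ^ m"
    unfolding qpow_def Let_def k_def[symmetric] fl ..
  thus ?thesis using m by blast
qed

lemma qpow_zero_idx:
  assumes "1 < p" shows "qpow p x 0 = 1"
proof -
  have "0 \<in> Zp_idx p" unfolding Zp_idx_def by (auto intro!: exI[of _ 0])
  then obtain k m where "(0::rat) = of_nat m / of_nat (p ^ k)" "qpow p x 0 = x k ^ m"
    using qpow_repr[OF assms] by blast
  moreover have "(of_nat (p ^ k) :: rat) \<noteq> 0" using assms by simp
  ultimately show ?thesis using assms by auto
qed

lemma qpow_zero_pt:
  assumes "1 < p" "n \<in> Zp_idx p" "n \<noteq> 0"
  shows "qpow p (\<lambda>_. (0::'c::field)) n = 0"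
proof -
  obtain k m where km: "n = of_nat m / of_nat (p ^ k)" "qpow p (\<lambda>_. (0::'c)) n = 0 ^ m"
    using qpow_repr[OF assms(1,2)] by blast
  hence "m \<noteq> 0" using assms(3) by auto
  thus ?thesis using km by simp
qed

lemma qpow_v:
  fixes v :: "'c::field \<Rightarrow> real"
  assumes na: "nonarch_abs v" and "1 < p" "n \<in> Zp_idx p" "\<forall>i. x (Suc i) ^ p = x i" "0 < v (x 0)"
  shows "v (qpow p x n) = v (x 0) powr (of_rat n)"
proof -
  obtain k m where km: "n = of_nat m / of_nat (p ^ k)" "qpow p x n = x k ^ m"
    using qpow_repr[OF assms(2,3)] by blast
  have "v (qpow p x n) = v (x k) ^ m" using km v_power[OF na] by simp
  also have "\<dots> = (v (x 0) powr (1 / real p ^ k)) ^ m"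
    using point_v[OF na, of p x k] assms by simp
  also have "\<dots> = (v (x 0) powr (1 / real p ^ k)) powr (real m)"
    using assms(5) by (simp add: powr_realpow)
  also have "\<dots> = v (x 0) powr (real m / real p ^ k)" by (simp add: powr_powr)
  also have "real m / real p ^ k = of_rat n" using km by (simp add: of_rat_divide of_rat_power)
  finally show ?thesis .
qed



lemma subsingleton_finite: "(\<forall>x\<in>B. \<forall>y\<in>B. x = y) \<Longrightarrow> finite B"
proof (cases "B = {}")
  case False
  assume h: "\<forall>x\<in>B. \<forall>y\<in>B. x = y"
  then obtain x where "x \<in> B" using False by blast
  hence "B \<subseteq> {x}" using h by blast
  thus ?thesis using finite_subset by blast
qed simp

lemma v_pos: "nonarch_abs v \<Longrightarrow> x \<noteq> 0 \<Longrightarrow> 0 < v x"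
  using v_nonneg[of v x] v_zero_iff[of v x] by (simp add: order_less_le)

lemma v_has_sumD:
  assumes "v_has_sum v g S s" "0 < e"
  obtains F where "finite F" "F \<subseteq> S"
    "\<And>G. finite G \<Longrightarrow> F \<subseteq> G \<Longrightarrow> G \<subseteq> S \<Longrightarrow> v (s - sum g G) < e"
  using assms unfolding v_has_sum_def by meson

theorem mainTheorem15:
  fixes v :: "'c::field_char_0 \<Rightarrow> real" and L :: "'c set" and p :: nat
    and f :: "rat \<Rightarrow> 'c" and a :: 'c
  assumes "nonarch_abs v"
    and "v_complete_on v UNIV"
    and "alg_closed TYPE('c)"
    and "perfectoid_in v p L"
    and "O_Dinf v p L f"
    and "a \<in> L"
    and "\<forall>x. Dinf_point v p x \<longrightarrow> v_has_sum v (\<lambda>n. f n * qpow p x n) (Zp_idx p) a"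
  shows "f 0 = a \<and> (\<forall>n\<in>Zp_idx p. n \<noteq> 0 \<longrightarrow> f n = 0)"
proof -
  note na = assms(1)
  have p1: "1 < p" using assms(4) unfolding perfectoid_in_def using prime_gt_1_nat by blast
  hence p0: "0 < p" by simp
  have z0: "(0::rat) \<in> Zp_idx p" unfolding Zp_idx_def by (auto intro!: exI[of _ 0])
  have f0: "f 0 = a"
  proof -
    let ?z = "\<lambda>_::nat. (0::'c)"
    have "Dinf_point v p ?z" using p0 v_zero[OF na] by (simp add: Dinf_point_def)
    hence hs: "v_has_sum v (\<lambda>n. f n * qpow p ?z n) (Zp_idx p) a" using assms(7) by blast
    have small: "v (a - f 0) < e" if "0 < e" for e
    proof -
      obtain F where F: "finite F" "F \<subseteq> Zp_idx p"
        "\<And>G. finite G \<Longrightarrow> F \<subseteq> G \<Longrightarrow> G \<subseteq> Zp_idx p \<Longrightarrow> v (a - sum (\<lambda>n. f n * qpow p ?z n) G) < e"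
        using v_has_sumD[OF hs \<open>0 < e\<close>] by blast
      let ?G = "insert 0 F"
      have "sum (\<lambda>n. f n * qpow p ?z n) ?G = f 0 * qpow p ?z 0 + sum (\<lambda>n. f n * qpow p ?z n) (?G - {0})"
        using F(1) by (simp add: sum.remove[of ?G 0])
      also have "sum (\<lambda>n. f n * qpow p ?z n) (?G - {0}) = 0"
        using F(2) qpow_zero_pt[OF p1] by (intro sum.neutral) auto
      finally have "sum (\<lambda>n. f n * qpow p ?z n) ?G = f 0" using qpow_zero_idx[OF p1, of ?z] by simp
      moreover have "v (a - sum (\<lambda>n. f n * qpow p ?z n) ?G) < e"
        using F z0 by (intro F(3)) auto
      ultimately show ?thesis by simp
    qed
    have "v (a - f 0) = 0"
    proof (rule ccontr)
      assume "v (a - f 0) \<noteq> 0"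
      hence "0 < v (a - f 0)" using v_nonneg[OF na] order_less_le by metis
      thus False using small by fastforce
    qed
    thus ?thesis using v_zero_iff[OF na] by simp
  qed
  have rest: "\<forall>n\<in>Zp_idx p. n \<noteq> 0 \<longrightarrow> f n = 0"
  proof (rule ccontr)
    assume "\<not> ?thesis"
    then obtain n0 where n0: "n0 \<in> Zp_idx p" "n0 \<noteq> 0" "f n0 \<noteq> 0" by blast
    have n0pos: "0 \<le> real_of_rat n0" using n0(1) unfolding Zp_idx_def by auto
    define c where "c = v (f n0)"
    have cpos: "0 < c" unfolding c_def using n0(3) v_nonneg[OF na] v_zero_iff[OF na] order_less_le by metis
    obtain w where w: "w \<in> L" "1 < v w" "v w < 1 + 1"
      using assms(4) unfolding perfectoid_in_def by (meson zero_less_one)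
    define \<pi> where "\<pi> = inverse w"
    define \<beta> where "\<beta> = v \<pi>"
    have \<beta>: "0 < \<beta>" "\<beta> < 1" using w unfolding \<beta>_def \<pi>_def v_inverse[OF na]
      by (auto simp: inverse_less_1_iff)
    define R where "R j = \<beta> powr (1 + 1 / real p ^ j)" for j :: nat
    have Rpos: "0 < R j" for j unfolding R_def using \<beta> by simp
    have Rle: "R j \<le> \<beta>" for j
      using powr_mono'[of 1 "1 + 1 / real p ^ j" \<beta>] \<beta> unfolding R_def by simp
    have Rge: "\<beta> powr 2 \<le> R j" for j
    proof -
      have "1 / real p ^ j \<le> 1" using p1 by (simp add: divide_le_eq_1 one_le_power)
      thus ?thesis using powr_mono'[of "1 + 1 / real p ^ j" 2 \<beta>] \<beta> unfolding R_def by simp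
    qed
    define \<theta> where "\<theta> = c * (\<beta> powr 2) powr (of_rat n0) / 2"
    have \<theta>pos: "0 < \<theta>" unfolding \<theta>_def using cpos \<beta> by simp
    define K where "K = {n\<in>Zp_idx p. \<theta> \<le> v (f n) * \<beta> powr (of_rat n)}"
    have Kfin: "finite K" using assms(5) \<beta> \<theta>pos unfolding O_Dinf_def K_def by auto
    define K' where "K' = {n\<in>K. n \<noteq> 0 \<and> f n \<noteq> 0}"
    have K'fin: "finite K'" using Kfin unfolding K'_def by simp
    define t where "t j n = v (f n) * R j powr (of_rat n)" for j n
    have tn0: "2 * \<theta> \<le> t j n0" for j
    proof -
      have "(\<beta> powr 2) powr (of_rat n0) \<le> R j powr (of_rat n0)"
        using powr_mono2[OF n0pos _ Rge[of j]] \<beta> by simp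
      thus ?thesis unfolding t_def \<theta>_def c_def using v_nonneg[OF na, of "f n0"]
        by (simp add: mult_left_mono)
    qed
    have n0K': "n0 \<in> K'"
    proof -
      have "(\<beta> powr 2) powr (of_rat n0) \<le> \<beta> powr (of_rat n0)"
        using powr_mono2[OF n0pos _ order_trans[OF Rge Rle]] \<beta> by simp
      hence "c * (\<beta> powr 2) powr (of_rat n0) \<le> c * \<beta> powr (of_rat n0)"
        using cpos by simp
      moreover have "0 \<le> c * (\<beta> powr 2) powr (of_rat n0)" using cpos by simp
      ultimately have "\<theta> \<le> v (f n0) * \<beta> powr (of_rat n0)" unfolding \<theta>_def c_def
        by linarith
      thus ?thesis using n0 unfolding K'_def K_def by simp
    qed
    define Bad where "Bad = (\<Union>nm\<in>{nm\<in>K' \<times> K'. fst nm \<noteq> snd nm}. {j. t j (fst nm) = t j (snd nm)})"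
    have Badfin: "finite Bad"
      unfolding Bad_def
    proof (rule finite_UN_I)
      show "finite {nm\<in>K' \<times> K'. fst nm \<noteq> snd nm}" using K'fin by simp
    next
      fix nm assume nm: "nm \<in> {nm\<in>K' \<times> K'. fst nm \<noteq> snd nm}"
      obtain n m where nmd: "nm = (n, m)" by (cases nm)
      have ne: "n \<noteq> m" "n \<in> K'" "m \<in> K'" using nm nmd by auto
      have "f n \<noteq> 0" "f m \<noteq> 0" using ne(2,3) unfolding K'_def by auto
      hence vn: "0 < v (f n)" "0 < v (f m)" using v_pos[OF na] by auto
      have d: "real_of_rat n - real_of_rat m \<noteq> 0" using ne(1) by simp
      have key: "R j powr (real_of_rat n - real_of_rat m) = v (f m) / v (f n)"
        if "t j n = t j m" for j
      proof -
        have "v (f n) * (R j powr (real_of_rat n - real_of_rat m) * R j powr (of_rat m))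
              = v (f m) * R j powr (of_rat m)"
          using that unfolding t_def by (simp add: powr_add[symmetric])
        hence "v (f n) * R j powr (real_of_rat n - real_of_rat m) = v (f m)"
          using Rpos[of j] by (simp add: mult.assoc[symmetric])
        thus ?thesis using vn by (simp add: field_simps)
      qed
      show "finite {j. t j (fst nm) = t j (snd nm)}"
      proof (rule subsingleton_finite, intro ballI)
        fix j1 j2 assume "j1 \<in> {j. t j (fst nm) = t j (snd nm)}" "j2 \<in> {j. t j (fst nm) = t j (snd nm)}"
        hence "R j1 powr (real_of_rat n - real_of_rat m) = R j2 powr (real_of_rat n - real_of_rat m)"
          using key nmd by simp
        hence "(R j1 powr (real_of_rat n - real_of_rat m)) powr (1 / (real_of_rat n - real_of_rat m))
             = (R j2 powr (real_of_rat n - real_of_rat m)) powr (1 / (real_of_rat n - real_of_rat m))"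
          by simp
        hence "R j1 = R j2" using d Rpos[of j1] Rpos[of j2] by (simp add: powr_powr)
        hence "1 + 1 / real p ^ j1 = 1 + 1 / real p ^ j2"
          unfolding R_def using powr_inj[of \<beta>] \<beta> by simp
        hence "real p ^ j1 = real p ^ j2" using p1 by simp
        thus "j1 = j2" using p1 by (simp add: power_inject_exp)
      qed
    qed
    obtain j where j: "j \<notin> Bad" using ex_new_if_finite[OF infinite_UNIV_nat Badfin] by blast
    define y where "y = rs p \<pi>"
    define X where "X = rs p (\<pi> * y j)"
    have yroot: "\<forall>i. y (Suc i) ^ p = y i" unfolding y_def using rs_root[OF assms(3) p0] by blast
    have Xroot: "\<forall>i. X (Suc i) ^ p = X i" unfolding X_def using rs_root[OF assms(3) p0] by blast
    have vX0: "v (X 0) = R j"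
    proof -
      have "v (y j) = \<beta> powr (1 / real p ^ j)"
        using point_v[OF na p0 yroot, of j] unfolding y_def \<beta>_def by simp
      hence "v (X 0) = \<beta> * \<beta> powr (1 / real p ^ j)"
        unfolding X_def using v_mult[OF na] \<beta>_def by simp
      also have "\<dots> = R j" unfolding R_def using \<beta> by (simp add: powr_add)
      finally show ?thesis .
    qed
    have Xpt: "Dinf_point v p X"
      unfolding Dinf_point_def using Xroot vX0 Rle[of j] \<beta> by simp
    have vterm: "v (f n * qpow p X n) = t j n" if "n \<in> Zp_idx p" for n
      using qpow_v[OF na p1 that Xroot] vX0 Rpos[of j] v_mult[OF na] unfolding t_def by simp
    define M where "M = Max (t j ` K')"
    have "M \<in> t j ` K'" unfolding M_def using K'fin n0K' by (intro Max_in) auto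
    then obtain n1 where n1: "n1 \<in> K'" "t j n1 = M" by blast
    have Mge: "t j n \<le> t j n1" if "n \<in> K'" for n
      using n1 that K'fin unfolding M_def by simp
    have tn1: "2 * \<theta> \<le> t j n1" using Mge[OF n0K'] tn0[of j] by simp
    have dom: "t j n < t j n1" if "n \<in> Zp_idx p" "n \<noteq> 0" "n \<noteq> n1" for n
    proof (cases "n \<in> K")
      case False
      have "0 \<le> real_of_rat n" using that(1) unfolding Zp_idx_def by auto
      hence "R j powr (of_rat n) \<le> \<beta> powr (of_rat n)"
        using powr_mono2 Rpos[of j] Rle[of j] by (simp add: less_imp_le)
      hence "t j n \<le> v (f n) * \<beta> powr (of_rat n)"
        unfolding t_def using v_nonneg[OF na, of "f n"] by (simp add: mult_left_mono)
      moreover have "v (f n) * \<beta> powr (of_rat n) < \<theta>" using False that(1) unfolding K_def by auto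
      ultimately show ?thesis using tn1 \<theta>pos by linarith
    next
      case True
      show ?thesis
      proof (cases "f n = 0")
        case True thus ?thesis using tn1 \<theta>pos unfolding t_def by (simp add: v_zero[OF na])
      next
        case False
        hence nK': "n \<in> K'" using True that unfolding K'_def by simp
        have "t j n \<noteq> t j n1" using j nK' n1(1) that(3) unfolding Bad_def by auto
        thus ?thesis using Mge[OF nK'] by simp
      qed
    qed
    have hs: "v_has_sum v (\<lambda>n. f n * qpow p X n) (Zp_idx p) a" using assms(7) Xpt by blast
    have tpos: "0 < t j n1" using tn1 \<theta>pos by simp
    obtain F where F: "finite F" "F \<subseteq> Zp_idx p"
      "\<And>G. finite G \<Longrightarrow> F \<subseteq> G \<Longrightarrow> G \<subseteq> Zp_idx p \<Longrightarrow> v (a - sum (\<lambda>n. f n * qpow p X n) G) < t j n1"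
      using v_has_sumD[OF hs tpos] by blast
    have n1Z: "n1 \<in> Zp_idx p" "n1 \<noteq> 0" using n1(1) unfolding K'_def K_def by auto
    define g where "g n = f n * qpow p X n" for n
    define G where "G = insert 0 (insert n1 F)"
    have Gfin: "finite G" "G \<subseteq> Zp_idx p" unfolding G_def using F z0 n1Z by auto
    define H where "H = G - {0} - {n1}"
    have "sum g G = g 0 + sum g (G - {0})" using Gfin by (intro sum.remove) (auto simp: G_def)
    also have "sum g (G - {0}) = g n1 + sum g H"
      unfolding H_def using Gfin n1Z by (intro sum.remove) (auto simp: G_def)
    finally have sG: "sum g G = a + (g n1 + sum g H)"
      unfolding g_def using qpow_zero_idx[OF p1, of X] f0 by simp
    have "v (sum g H) < t j n1"
    proof (rule v_sum_less[OF na])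
      show "finite H" using Gfin unfolding H_def by simp
      show "0 < t j n1" by (rule tpos)
      fix n assume "n \<in> H"
      hence "n \<in> Zp_idx p" "n \<noteq> 0" "n \<noteq> n1" using Gfin unfolding H_def by auto
      thus "v (g n) < t j n1" using vterm dom unfolding g_def by simp
    qed
    hence "v (g n1 + sum g H) = t j n1"
      using v_add_dom[OF na] vterm[OF n1Z(1)] unfolding g_def by simp
    moreover have "a - sum g G = - (g n1 + sum g H)" using sG by simp
    ultimately have "v (a - sum g G) = t j n1" using v_uminus[OF na] by metis
    moreover have "v (a - sum g G) < t j n1" using F(3)[OF Gfin(1) _ Gfin(2)] unfolding G_def g_def by auto
    ultimately show False by simp
  qed
  show ?thesis using f0 rest by blast
qed


end
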